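(* If $X$ is a locally finite simplicial set, then $\mathbb Z^{(X)}$ is a free abelian group.
   Context: $\mathbb Z^{\Delta^n}=\mathbb Z[t_0,\dots,t_n]/(t_0+\dots+t_n-1)$ forms a simplicial ring; $\mathbb Z^X=\hom_{\mathrm{sSet}}(X,\mathbb Z^{\Delta^\bullet})$; the support of $\phi$ is the simplicial subset generated by simplices on which $\phi$ is nonzero; $\mathbb Z^{(X)}\subset\mathbb Z^X$ consists of finitely supported elements. $X$ is locally finite if every simplex is a face of only finitely many nondegenerate simplices. *)

theory Defs
  imports Complex_Main "HOL-Library.Function_Algebras"
begin

text \<open>A monotone map [m] -> [n] of the simplex category, represented by a function
  nat => nat whose values on {0..m} are relevant.\<close>
definition mono_map :: "(nat \<Rightarrow> nat) \<Rightarrow> nat \<Rightarrow> nat \<Rightarrow> bool" where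
  "mono_map \<theta> m n \<longleftrightarrow> (\<forall>i\<le>m. \<theta> i \<le> n) \<and> (\<forall>i j. i \<le> j \<and> j \<le> m \<longrightarrow> \<theta> i \<le> \<theta> j)"

text \<open>A simplicial set: sets of n-simplices X n and, for every monotone
  theta : [m] -> [n], the induced map act theta m n : X n -> X m (contravariant functor).\<close>
definition simplicial_set :: "(nat \<Rightarrow> 'a set) \<Rightarrow> ((nat \<Rightarrow> nat) \<Rightarrow> nat \<Rightarrow> nat \<Rightarrow> 'a \<Rightarrow> 'a) \<Rightarrow> bool" where
  "simplicial_set X act \<longleftrightarrow>
     (\<forall>m n \<theta> x. mono_map \<theta> m n \<and> x \<in> X n \<longrightarrow> act \<theta> m n x \<in> X m) \<and>
     (\<forall>n x. x \<in> X n \<longrightarrow> act id n n x = x) \<and>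
     (\<forall>k m n \<theta> \<psi> x. mono_map \<psi> k m \<and> mono_map \<theta> m n \<and> x \<in> X n \<longrightarrow>
         act (\<theta> \<circ> \<psi>) k n x = act \<psi> k m (act \<theta> m n x)) \<and>
     (\<forall>m n \<theta> \<theta>' x. (\<forall>i\<le>m. \<theta> i = \<theta>' i) \<and> x \<in> X n \<longrightarrow> act \<theta> m n x = act \<theta>' m n x)"

definition degenerate :: "(nat \<Rightarrow> 'a set) \<Rightarrow> ((nat \<Rightarrow> nat) \<Rightarrow> nat \<Rightarrow> nat \<Rightarrow> 'a \<Rightarrow> 'a) \<Rightarrow> nat \<Rightarrow> 'a \<Rightarrow> bool" where
  "degenerate X act n x \<longleftrightarrow> (\<exists>m<n. \<exists>\<theta> y. mono_map \<theta> n m \<and> y \<in> X m \<and> x = act \<theta> n m y)"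

definition nondegenerate :: "(nat \<Rightarrow> 'a set) \<Rightarrow> ((nat \<Rightarrow> nat) \<Rightarrow> nat \<Rightarrow> nat \<Rightarrow> 'a \<Rightarrow> 'a) \<Rightarrow> nat \<Rightarrow> 'a \<Rightarrow> bool" where
  "nondegenerate X act n x \<longleftrightarrow> x \<in> X n \<and> \<not> degenerate X act n x"

definition is_face_of :: "(nat \<Rightarrow> 'a set) \<Rightarrow> ((nat \<Rightarrow> nat) \<Rightarrow> nat \<Rightarrow> nat \<Rightarrow> 'a \<Rightarrow> 'a) \<Rightarrow> nat \<Rightarrow> 'a \<Rightarrow> nat \<Rightarrow> 'a \<Rightarrow> bool" where
  "is_face_of X act n y m x \<longleftrightarrow> x \<in> X m \<and>
     (\<exists>\<theta>. mono_map \<theta> n m \<and> inj_on \<theta> {0..n} \<and> y = act \<theta> n m x)"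

definition locally_finite :: "(nat \<Rightarrow> 'a set) \<Rightarrow> ((nat \<Rightarrow> nat) \<Rightarrow> nat \<Rightarrow> nat \<Rightarrow> 'a \<Rightarrow> 'a) \<Rightarrow> bool" where
  "locally_finite X act \<longleftrightarrow>
     (\<forall>n y. y \<in> X n \<longrightarrow>
        finite {(m, x). nondegenerate X act m x \<and> is_face_of X act n y m x})"

text \<open>Z[t_0,...,t_n]/(t_0+...+t_n-1) is realised (isomorphically, as the quotient is
  torsion free polynomial ring Z[t_1..t_n] and R is infinite) as the ring of functions on the
  affine hyperplane H n = {t. t_0+...+t_n = 1} (inside R^(0..n)) given by integer polynomials.
  Functions are made extensional: value 0 off H n.\<close>
definition hyperplane :: "nat \<Rightarrow> (nat \<Rightarrow> real) set" where
  "hyperplane n = {t. (\<forall>i>n. t i = 0) \<and> (\<Sum>i\<le>n. t i) = 1}"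

inductive_set int_polyfun :: "nat \<Rightarrow> ((nat \<Rightarrow> real) \<Rightarrow> real) set" for n :: nat where
  const: "(\<lambda>_. of_int c) \<in> int_polyfun n"
| var: "i \<le> n \<Longrightarrow> (\<lambda>t. t i) \<in> int_polyfun n"
| add: "p \<in> int_polyfun n \<Longrightarrow> q \<in> int_polyfun n \<Longrightarrow> (\<lambda>t. p t + q t) \<in> int_polyfun n"
| mult: "p \<in> int_polyfun n \<Longrightarrow> q \<in> int_polyfun n \<Longrightarrow> (\<lambda>t. p t * q t) \<in> int_polyfun n"

definition Zdelta :: "nat \<Rightarrow> ((nat \<Rightarrow> real) \<Rightarrow> real) set" where
  "Zdelta n = {(\<lambda>t. if t \<in> hyperplane n then p t else 0) | p. p \<in> int_polyfun n}"

text \<open>For theta : [m] -> [n], theta_* : H m -> H n, (theta_* s)_j = sum of s_i over theta i = j;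
  theta^* : Z^{Delta^n} -> Z^{Delta^m} is precomposition with theta_*
  (i.e. t_j maps to the sum of t_i over theta i = j).\<close>
definition push :: "(nat \<Rightarrow> nat) \<Rightarrow> nat \<Rightarrow> (nat \<Rightarrow> real) \<Rightarrow> (nat \<Rightarrow> real)" where
  "push \<theta> m s = (\<lambda>j. \<Sum>i\<in>{i. i \<le> m \<and> \<theta> i = j}. s i)"

definition pull :: "(nat \<Rightarrow> nat) \<Rightarrow> nat \<Rightarrow> ((nat \<Rightarrow> real) \<Rightarrow> real) \<Rightarrow> ((nat \<Rightarrow> real) \<Rightarrow> real)" where
  "pull \<theta> m g = (\<lambda>s. if s \<in> hyperplane m then g (push \<theta> m s) else 0)"

text \<open>Z^X = hom_sSet(X, Z^{Delta^bullet}): natural families phi n x in Z^{Delta^n}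
  (extended by 0 outside the simplices), with pointwise group structure.\<close>
definition ZX :: "(nat \<Rightarrow> 'a set) \<Rightarrow> ((nat \<Rightarrow> nat) \<Rightarrow> nat \<Rightarrow> nat \<Rightarrow> 'a \<Rightarrow> 'a)
                  \<Rightarrow> (nat \<Rightarrow> 'a \<Rightarrow> (nat \<Rightarrow> real) \<Rightarrow> real) set" where
  "ZX X act = {\<phi>. (\<forall>n x. x \<in> X n \<longrightarrow> \<phi> n x \<in> Zdelta n) \<and>
                   (\<forall>n x. x \<notin> X n \<longrightarrow> \<phi> n x = (\<lambda>_. 0)) \<and>
                   (\<forall>m n \<theta> x. mono_map \<theta> m n \<and> x \<in> X n \<longrightarrow>
                        \<phi> m (act \<theta> m n x) = pull \<theta> m (\<phi> n x))}"

definition support :: "(nat \<Rightarrow> 'a set) \<Rightarrow> ((nat \<Rightarrow> nat) \<Rightarrow> nat \<Rightarrow> nat \<Rightarrow> 'a \<Rightarrow> 'a)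
                  \<Rightarrow> (nat \<Rightarrow> 'a \<Rightarrow> (nat \<Rightarrow> real) \<Rightarrow> real) \<Rightarrow> nat \<Rightarrow> 'a set" where
  "support X act \<phi> n = {act \<theta> n k x | \<theta> k x. mono_map \<theta> n k \<and> x \<in> X k \<and> \<phi> k x \<noteq> (\<lambda>_. 0)}"

text \<open>A simplicial subset is finite iff it has finitely many nondegenerate simplices
  (nondegeneracy in a simplicial subset agrees with nondegeneracy in X).\<close>
definition finitely_supported :: "(nat \<Rightarrow> 'a set) \<Rightarrow> ((nat \<Rightarrow> nat) \<Rightarrow> nat \<Rightarrow> nat \<Rightarrow> 'a \<Rightarrow> 'a)
                  \<Rightarrow> (nat \<Rightarrow> 'a \<Rightarrow> (nat \<Rightarrow> real) \<Rightarrow> real) \<Rightarrow> bool" where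
  "finitely_supported X act \<phi> \<longleftrightarrow>
     finite {(n, y). y \<in> support X act \<phi> n \<and> nondegenerate X act n y}"

definition ZX_fin :: "(nat \<Rightarrow> 'a set) \<Rightarrow> ((nat \<Rightarrow> nat) \<Rightarrow> nat \<Rightarrow> nat \<Rightarrow> 'a \<Rightarrow> 'a)
                  \<Rightarrow> (nat \<Rightarrow> 'a \<Rightarrow> (nat \<Rightarrow> real) \<Rightarrow> real) set" where
  "ZX_fin X act = {\<phi> \<in> ZX X act. finitely_supported X act \<phi>}"

definition zsmult :: "int \<Rightarrow> 'g::ab_group_add \<Rightarrow> 'g" where
  "zsmult k g = (if 0 \<le> k then (\<Sum>_<nat k. g) else - (\<Sum>_<nat (- k). g))"

definition free_abelian_subgroup :: "'g::ab_group_add set \<Rightarrow> bool" where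
  "free_abelian_subgroup G \<longleftrightarrow>
     0 \<in> G \<and> (\<forall>a\<in>G. \<forall>b\<in>G. a - b \<in> G) \<and>
     (\<exists>B\<subseteq>G. \<forall>g\<in>G. \<exists>!c :: 'g \<Rightarrow> int.
        (\<forall>b. b \<notin> B \<longrightarrow> c b = 0) \<and> finite {b. c b \<noteq> 0} \<and>
        g = (\<Sum>b\<in>{b. c b \<noteq> 0}. zsmult (c b) b))"

end

theory Submission
  imports Defs "HOL-Computational_Algebra.Polynomial"
begin


lemma zs0[simp]: "zsmult 0 g = 0" by (simp add: zsmult_def)

lemma zs_add1: "zsmult (k+1) g = zsmult k g + (g::'g::ab_group_add)"
proof (cases "0 \<le> k")
  case True
  then have "nat (k+1) = Suc (nat k)" by simp
  then show ?thesis using True by (simp add: zsmult_def)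
next
  case False
  define m where "m = nat (-(k+1))"
  have "Suc (nat (-(k+1))) = nat (1 + -(k+1))" using False by (intro Suc_nat_eq_nat_zadd1) simp
  then have m: "nat (-k) = Suc m" "nat (-(k+1)) = m" unfolding m_def by simp_all
  show ?thesis
  proof (cases "0 \<le> k+1")
    case True
    then have "k = -1" using False by simp
    then show ?thesis by (simp add: zsmult_def)
  next
    case F2: False
    then show ?thesis using False m by (simp add: zsmult_def)
  qed
qed

lemma zs_sub1: "zsmult (k-1) g = zsmult k g - (g::'g::ab_group_add)"
  using zs_add1[of "k-1" g] by (simp add: algebra_simps)

lemma zs_add: "zsmult (a+b) g = zsmult a g + zsmult b (g::'g::ab_group_add)"
proof (induction b rule: int_induct[where k=0])
  case base then show ?case by simp
next
  case (step1 i)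
  then show ?case using zs_add1[of "a+i" g] zs_add1[of i g] by (simp add: algebra_simps)
next
  case (step2 i)
  have "zsmult (a + (i - 1)) g = zsmult (a+i) g - g" by (metis add_diff_eq zs_sub1)
  also have "\<dots> = zsmult a g + (zsmult i g - g)" using step2 by (simp add: algebra_simps)
  also have "\<dots> = zsmult a g + zsmult (i - 1) g" by (simp add: zs_sub1)
  finally show ?case .
qed

lemma zs_neg: "zsmult (-a) g = - zsmult a (g::'g::ab_group_add)"
  using zs_add[of a "-a" g] by (simp add: eq_neg_iff_add_eq_0 add.commute)

lemma zs_diff: "zsmult (a-b) g = zsmult a g - zsmult b (g::'g::ab_group_add)"
  using zs_add[of a "-b" g] zs_neg[of b g] by simp

lemma zs_closed:
  assumes G0: "0 \<in> G" and Gm: "\<forall>a\<in>G. \<forall>b\<in>G. a - b \<in> G" and g: "g \<in> G"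
  shows "zsmult k g \<in> (G::'g::ab_group_add set)"
proof (induction k rule: int_induct[where k=0])
  case base then show ?case using G0 by simp
next
  case (step1 i)
  have "- g \<in> G" using Gm G0 g by (metis diff_0)
  then have "zsmult i g - - g \<in> G" using Gm step1 by blast
  then show ?case using zs_add1[of i g] by simp
next
  case (step2 i)
  then show ?case using zs_sub1[of i g] Gm g by simp
qed

lemma zs_L:
  assumes G0: "0 \<in> G" and Gm: "\<forall>a\<in>G. \<forall>b\<in>G. a - b \<in> G" and g: "g \<in> G"
  and Ladd: "\<And>a b. a\<in>G \<Longrightarrow> b\<in>G \<Longrightarrow> L (a - b) = L a - (L b::int)"
  shows "L (zsmult k g) = k * L (g::'g::ab_group_add)"
proof (induction k rule: int_induct[where k=0])
  case base then show ?case using Ladd[OF G0 G0] by simp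
next
  case (step1 i)
  have ng: "- g \<in> G" using Gm G0 g by (metis diff_0)
  have L0: "L 0 = 0" using Ladd[OF G0 G0] by simp
  have Lng: "L (- g) = - L g" using Ladd[OF G0 g] L0 by simp
  have "L (zsmult i g - - g) = L (zsmult i g) - L (-g)"
    using Ladd[OF zs_closed[OF G0 Gm g] ng] by simp
  then show ?case using zs_add1[of i g] step1 Lng by (simp add: algebra_simps)
next
  case (step2 i)
  have "L (zsmult (i - 1) g) = L (zsmult i g) - L g"
    using zs_sub1[of i g] Ladd[OF zs_closed[OF G0 Gm g] g] by simp
  then show ?case using step2 by (simp add: algebra_simps)
qed



lemma finite_max_rel:
  assumes tot: "total_on UNIV r" and rf: "refl_on UNIV r" and tr: "trans r"
  shows "finite Y \<Longrightarrow> Y \<noteq> {} \<Longrightarrow> \<exists>m\<in>Y. \<forall>y\<in>Y. (y, m) \<in> r"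
proof (induction Y rule: finite_ne_induct)
  case (singleton x) then show ?case using rf by (auto simp: refl_on_def)
next
  case (insert x F)
  then obtain m where m: "m \<in> F" "\<forall>y\<in>F. (y, m) \<in> r" by blast
  show ?case
  proof (cases "(x, m) \<in> r")
    case True then show ?thesis using m by auto
  next
    case False
    then have "x \<noteq> m" using rf by (auto simp: refl_on_def)
    then have "(m, x) \<in> r" using tot False by (auto simp: total_on_def)
    then have "\<forall>y\<in>F. (y, x) \<in> r" using m tr unfolding trans_def by blast
    then show ?thesis using rf by (auto simp: refl_on_def)
  qed
qed

lemma L_sum:
  assumes G0: "0 \<in> G" and Gm: "\<forall>a\<in>G. \<forall>b\<in>G. a - b \<in> G"
  and Ladd: "\<And>a b. a\<in>G \<Longrightarrow> b\<in>G \<Longrightarrow> L (a - b) = L a - (L b::int)"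
  shows "finite T \<Longrightarrow> (\<forall>b\<in>T. f b \<in> G) \<Longrightarrow> sum f T \<in> (G::'g::ab_group_add set) \<and> L (sum f T) = (\<Sum>b\<in>T. L (f b))"
proof (induction T rule: finite_induct)
  case empty then show ?case using G0 Ladd[OF G0 G0] by simp
next
  case (insert x F)
  have fx: "f x \<in> G" using insert by auto
  have s: "sum f F \<in> G" "L (sum f F) = (\<Sum>b\<in>F. L (f b))" using insert by auto
  have nx: "- sum f F \<in> G" using Gm G0 s(1) by (metis diff_0)
  have e: "f x + sum f F = f x - - sum f F" by simp
  have L0: "L 0 = 0" using Ladd[OF G0 G0] by simp
  have "L (- sum f F) = - L (sum f F)" using Ladd[OF G0 s(1)] L0 by simp
  then have "L (f x - - sum f F) = L (f x) + (\<Sum>b\<in>F. L (f b))" using Ladd[OF fx nx] s by simp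
  moreover have "f x - - sum f F \<in> G" using Gm fx nx by blast
  ultimately show ?case by (simp only: sum.insert[OF insert.hyps] e)
qed

lemma free_from_functionals:
  fixes G :: "'g::ab_group_add set" and L :: "'i \<Rightarrow> 'g \<Rightarrow> int"
  assumes G0: "0 \<in> G" and Gm: "\<forall>a\<in>G. \<forall>b\<in>G. a - b \<in> G"
  and Ladd: "\<And>i a b. a\<in>G \<Longrightarrow> b\<in>G \<Longrightarrow> L i (a - b) = L i a - L i b"
  and Lfin: "\<And>g. g\<in>G \<Longrightarrow> finite {i. L i g \<noteq> 0}"
  and Lsep: "\<And>g. g\<in>G \<Longrightarrow> (\<forall>i. L i g = 0) \<Longrightarrow> g = 0"
  shows "free_abelian_subgroup G"
proof -
  obtain r :: "'i rel" where wo: "well_order_on UNIV r" using well_order_on by blast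
  have tot: "total_on UNIV r" and rf: "refl_on UNIV r" and tr: "trans r" and an: "antisym r"
    and wf: "wf (r - Id)"
    using wo by (auto simp: order_on_defs)
  have rr: "(a, a) \<in> r" for a using rf by (auto simp: refl_on_def)
  have L0: "L i 0 = 0" for i using Ladd[OF G0 G0] by simp
  have Gneg: "- g \<in> G" if "g \<in> G" for g using Gm G0 that by (metis diff_0)
  have Lneg: "L i (- g) = - L i g" if "g \<in> G" for i g using Ladd[OF G0 that] L0 by simp
  have Gadd: "a + b \<in> G" if "a \<in> G" "b \<in> G" for a b
    using Gm Gneg[OF that(2)] that(1) by (metis diff_minus_eq_add)
  have zsG: "zsmult k g \<in> G" if "g \<in> G" for k g using zs_closed[OF G0 Gm that] .
  have zsL: "L i (zsmult k g) = k * L i g" if "g \<in> G" for i k g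
    using zs_L[OF G0 Gm that, of "L i"] Ladd by blast
  define F where "F \<alpha> = {g\<in>G. \<forall>i. L i g \<noteq> 0 \<longrightarrow> (i, \<alpha>) \<in> r}" for \<alpha>
  have Fm: "a - b \<in> F \<alpha>" if "a \<in> F \<alpha>" "b \<in> F \<alpha>" for a b \<alpha>
  proof -
    have G: "a \<in> G" "b \<in> G" using that unfolding F_def by auto
    have "L i (a - b) \<noteq> 0 \<longrightarrow> (i, \<alpha>) \<in> r" for i
      using Ladd[OF G, of i] that unfolding F_def by (cases "L i a = 0"; cases "L i b = 0") auto
    then show ?thesis using Gm G unfolding F_def by blast
  qed
  have Fz: "zsmult k g \<in> F \<alpha>" if "g \<in> F \<alpha>" for k g \<alpha>
    using that zsG zsL unfolding F_def by auto
  define A where "A = {\<alpha>. \<exists>g\<in>F \<alpha>. L \<alpha> g \<noteq> 0}"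
  define dn where "dn \<alpha> = (LEAST n::nat. n > 0 \<and> (\<exists>g\<in>F \<alpha>. L \<alpha> g = int n))" for \<alpha>
  have dn_ex: "dn \<alpha> > 0 \<and> (\<exists>g\<in>F \<alpha>. L \<alpha> g = int (dn \<alpha>))" if aA: "\<alpha> \<in> A" for \<alpha>
  proof -
    obtain g where g: "g \<in> F \<alpha>" "L \<alpha> g \<noteq> 0" using aA unfolding A_def by auto
    have "\<exists>n::nat. n > 0 \<and> (\<exists>g\<in>F \<alpha>. L \<alpha> g = int n)"
    proof (cases "L \<alpha> g > 0")
      case True then show ?thesis using g by (intro exI[of _ "nat (L \<alpha> g)"]) auto
    next
      case False
      have "- g \<in> F \<alpha>" using Fz[OF g(1), of "-1"] zs_neg[of 1 g] by (simp add: zsmult_def)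
      moreover have "L \<alpha> (-g) = - L \<alpha> g" using g Lneg unfolding F_def by auto
      ultimately show ?thesis using g False by (intro exI[of _ "nat (- L \<alpha> g)"]) auto
    qed
    then show ?thesis unfolding dn_def by (rule LeastI_ex)
  qed
  define h where "h \<alpha> = (SOME g. g \<in> F \<alpha> \<and> L \<alpha> g = int (dn \<alpha>))" for \<alpha>
  have h: "h \<alpha> \<in> F \<alpha>" "L \<alpha> (h \<alpha>) = int (dn \<alpha>)" "dn \<alpha> > 0" if "\<alpha> \<in> A" for \<alpha>
    using dn_ex[OF that] someI_ex[of "\<lambda>g. g \<in> F \<alpha> \<and> L \<alpha> g = int (dn \<alpha>)"] unfolding h_def by auto
  have dvd: "int (dn \<alpha>) dvd L \<alpha> g" if "\<alpha> \<in> A" "g \<in> F \<alpha>" for \<alpha> g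
  proof (rule ccontr)
    assume nd: "\<not> int (dn \<alpha>) dvd L \<alpha> g"
    define m where "m = L \<alpha> g"
    define dd where "dd = int (dn \<alpha>)"
    have dd: "dd > 0" using h[OF that(1)] dd_def by simp
    define g' where "g' = g - zsmult (m div dd) (h \<alpha>)"
    have g'F: "g' \<in> F \<alpha>" unfolding g'_def using Fm Fz that h by blast
    have "L \<alpha> g' = m - (m div dd) * dd"
      unfolding g'_def m_def using that h Ladd zsL F_def zsG dd_def by auto
    then have Lg': "L \<alpha> g' = m mod dd" by (simp add: minus_div_mult_eq_mod)
    have pos: "m mod dd > 0" using nd dd m_def dd_def
      by (metis dvd_eq_mod_eq_0 le_less pos_mod_sign)
    have lt: "m mod dd < dd" using dd by simp
    have "nat (m mod dd) > 0 \<and> (\<exists>g\<in>F \<alpha>. L \<alpha> g = int (nat (m mod dd)))"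
      using pos g'F Lg' by auto
    then have "dn \<alpha> \<le> nat (m mod dd)" unfolding dn_def by (rule Least_le)
    then show False using lt pos dd_def by linarith
  qed
  have hinj: "inj_on h A"
  proof (rule inj_onI)
    fix a b assume ab: "a \<in> A" "b \<in> A" "h a = h b"
    have "(a, b) \<in> r" using h[OF ab(1)] h[OF ab(2)] ab(3) unfolding F_def by auto
    moreover have "(b, a) \<in> r" using h[OF ab(1)] h[OF ab(2)] ab(3) unfolding F_def by auto
    ultimately show "a = b" using an by (simp add: antisym_def)
  qed
  define B where "B = h ` A"
  have BG: "B \<subseteq> G" using h unfolding B_def F_def by auto
  define rep where "rep g c \<longleftrightarrow> (\<forall>b. b \<notin> B \<longrightarrow> c b = 0) \<and> finite {b. c b \<noteq> 0} \<and>
        g = (\<Sum>b\<in>{b. c b \<noteq> 0}. zsmult (c b) b)" for g c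
  have rep_sum: "g = (\<Sum>b\<in>T. zsmult (c b) b)" if "rep g c" "finite T" "{b. c b \<noteq> 0} \<subseteq> T" for g c T
  proof -
    have "(\<Sum>b\<in>{b. c b \<noteq> 0}. zsmult (c b) b) = (\<Sum>b\<in>T. zsmult (c b) b)"
      by (rule sum.mono_neutral_left) (use that in auto)
    then show ?thesis using that unfolding rep_def by simp
  qed
  have rep0: "rep 0 (\<lambda>_. 0)" unfolding rep_def by simp
  have rep_add: "rep (g + zsmult k b0) (c(b0 := c b0 + k))" if "rep g c" "b0 \<in> B" for g c k b0
  proof -
    define c' where "c' = c(b0 := c b0 + k)"
    define T where "T = insert b0 {b. c b \<noteq> 0}"
    have fT: "finite T" using that unfolding T_def rep_def by auto
    have sub: "{b. c' b \<noteq> 0} \<subseteq> T" unfolding T_def c'_def by auto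
    have g: "g = (\<Sum>b\<in>T. zsmult (c b) b)" using rep_sum[OF that(1) fT] T_def by auto
    have "(\<Sum>b\<in>{b. c' b \<noteq> 0}. zsmult (c' b) b) = (\<Sum>b\<in>T. zsmult (c' b) b)"
      by (rule sum.mono_neutral_left) (use fT sub in auto)
    also have "\<dots> = zsmult (c' b0) b0 + (\<Sum>b\<in>T - {b0}. zsmult (c' b) b)"
      by (rule sum.remove) (use fT T_def in auto)
    also have "(\<Sum>b\<in>T - {b0}. zsmult (c' b) b) = (\<Sum>b\<in>T - {b0}. zsmult (c b) b)"
      unfolding c'_def by (rule sum.cong) auto
    also have "zsmult (c' b0) b0 = zsmult (c b0) b0 + zsmult k b0" unfolding c'_def by (simp add: zs_add)
    also have "g = zsmult (c b0) b0 + (\<Sum>b\<in>T - {b0}. zsmult (c b) b)"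
      unfolding g by (rule sum.remove) (use fT T_def in auto)
    ultimately have "(\<Sum>b\<in>{b. c' b \<noteq> 0}. zsmult (c' b) b) = g + zsmult k b0"
      by (simp add: algebra_simps)
    moreover have "\<forall>b. b \<notin> B \<longrightarrow> c' b = 0" using that unfolding c'_def rep_def by auto
    moreover have "finite {b. c' b \<noteq> 0}" using sub fT finite_subset by blast
    ultimately show ?thesis unfolding rep_def c'_def by simp
  qed
  have exist: "\<forall>g\<in>F \<alpha>. \<exists>c. rep g c" for \<alpha>
  proof (induction \<alpha> rule: wf_induct[OF wf])
    case (1 \<alpha>)
    show ?case
    proof
      fix g assume gF: "g \<in> F \<alpha>"
      obtain k g' where g': "g' \<in> F \<alpha>" "L \<alpha> g' = 0" and gk: "g = g' + zsmult k (h \<alpha>)"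
        and kA: "k \<noteq> 0 \<longrightarrow> \<alpha> \<in> A"
      proof (cases "\<alpha> \<in> A")
        case True
        obtain k where k: "L \<alpha> g = int (dn \<alpha>) * k" using dvd[OF True gF] by (auto elim: dvdE)
        define g' where "g' = g - zsmult k (h \<alpha>)"
        have "g' \<in> F \<alpha>" unfolding g'_def using Fm Fz gF h True by blast
        moreover have "L \<alpha> g' = 0" unfolding g'_def using gF h[OF True] Ladd zsL F_def zsG k by auto
        ultimately show ?thesis using that True g'_def by auto
      next
        case False
        then have "L \<alpha> g = 0" using gF A_def by auto
        then show ?thesis using that[of g 0] gF by simp
      qed
      have "\<exists>c. rep g' c"
      proof (cases "\<forall>i. L i g' = 0")
        case True
        then have "g' = 0" using Lsep g' F_def by auto
        then show ?thesis using rep0 by auto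
      next
        case False
        have "finite {i. L i g' \<noteq> 0}" using Lfin g' F_def by auto
        then obtain \<beta> where \<beta>: "\<beta> \<in> {i. L i g' \<noteq> 0}" "\<forall>y\<in>{i. L i g' \<noteq> 0}. (y, \<beta>) \<in> r"
          using finite_max_rel[OF tot rf tr] False by blast
        have "(\<beta>, \<alpha>) \<in> r - Id" using \<beta> g' unfolding F_def by auto
        moreover have "g' \<in> F \<beta>" using \<beta> g' unfolding F_def by auto
        ultimately show ?thesis using 1 by blast
      qed
      then obtain c where "rep g' c" by blast
      show "\<exists>c. rep g c"
      proof (cases "k = 0")
        case True then show ?thesis using gk \<open>rep g' c\<close> by auto
      next
        case False
        then have "h \<alpha> \<in> B" using kA B_def by auto
        then show ?thesis using rep_add[OF \<open>rep g' c\<close>] gk by blast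
      qed
    qed
  qed
  have uniq: "c1 = c2" if "rep g c1" "rep g c2" for g c1 c2
  proof (rule ccontr)
    assume ne: "c1 \<noteq> c2"
    define c where "c b = c1 b - c2 b" for b
    define T where "T = {b. c1 b \<noteq> 0} \<union> {b. c2 b \<noteq> 0}"
    have fT: "finite T" using that unfolding rep_def T_def by auto
    have TB: "T \<subseteq> B" using that unfolding rep_def T_def by auto
    have "g = (\<Sum>b\<in>T. zsmult (c1 b) b)" using rep_sum[OF that(1) fT] T_def by auto
    moreover have "g = (\<Sum>b\<in>T. zsmult (c2 b) b)" using rep_sum[OF that(2) fT] T_def by auto
    moreover have "(\<Sum>b\<in>T. zsmult (c b) b) = (\<Sum>b\<in>T. zsmult (c1 b) b) - (\<Sum>b\<in>T. zsmult (c2 b) b)"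
      unfolding c_def zs_diff by (rule sum_subtractf)
    ultimately have z: "(\<Sum>b\<in>T. zsmult (c b) b) = 0" by simp
    define Y where "Y = {\<alpha>\<in>A. c (h \<alpha>) \<noteq> 0}"
    have hY: "h ` Y \<subseteq> T" unfolding Y_def T_def c_def by auto
    have "inj_on h Y" using hinj by (rule inj_on_subset) (auto simp: Y_def)
    then have fY: "finite Y" using finite_imageD[OF finite_subset[OF hY fT]] by blast
    obtain b where b: "c b \<noteq> 0" using ne c_def by fastforce
    then have "c1 b \<noteq> 0 \<or> c2 b \<noteq> 0" unfolding c_def by auto
    then have "b \<in> B" using that unfolding rep_def by blast
    then have "Y \<noteq> {}" using b unfolding B_def Y_def by auto
    then obtain \<alpha> where \<alpha>: "\<alpha> \<in> Y" "\<forall>y\<in>Y. (y, \<alpha>) \<in> r"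
      using finite_max_rel[OF tot rf tr fY] by blast
    have \<alpha>A: "\<alpha> \<in> A" using \<alpha> Y_def by auto
    have allG: "\<forall>b\<in>T. zsmult (c b) b \<in> G" using TB BG zsG by blast
    have "L \<alpha> (\<Sum>b\<in>T. zsmult (c b) b) = (\<Sum>b\<in>T. L \<alpha> (zsmult (c b) b))"
      using L_sum[OF G0 Gm, of "L \<alpha>" T "\<lambda>b. zsmult (c b) b"] Ladd fT allG by blast
    also have "\<dots> = (\<Sum>b\<in>T. c b * L \<alpha> b)"
      by (rule sum.cong) (use TB BG zsL in auto)
    also have "\<dots> = (\<Sum>b\<in>{h \<alpha>}. c b * L \<alpha> b)"
    proof (rule sum.mono_neutral_right)
      show "finite T" by fact
      show "{h \<alpha>} \<subseteq> T" using hY \<alpha> by auto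
      show "\<forall>b\<in>T - {h \<alpha>}. c b * L \<alpha> b = 0"
      proof
        fix b assume bT: "b \<in> T - {h \<alpha>}"
        show "c b * L \<alpha> b = 0"
        proof (cases "c b = 0")
          case False
          obtain \<beta> where \<beta>: "\<beta> \<in> A" "b = h \<beta>" using bT TB B_def by auto
          have "\<beta> \<in> Y" using \<beta> False Y_def by auto
          then have "(\<beta>, \<alpha>) \<in> r" using \<alpha> by auto
          moreover have "\<beta> \<noteq> \<alpha>" using \<beta> bT by auto
          ultimately have "(\<alpha>, \<beta>) \<notin> r" using an by (auto simp: antisym_def)
          then have "L \<alpha> b = 0" using h[OF \<beta>(1)] \<beta>(2) unfolding F_def by auto
          then show ?thesis by simp
        qed simp
      qed
    qed
    also have "\<dots> = c (h \<alpha>) * int (dn \<alpha>)" using h[OF \<alpha>A] by simp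
    finally have "c (h \<alpha>) * int (dn \<alpha>) = 0" using z L0 by simp
    then show False using \<alpha> Y_def h[OF \<alpha>A] by auto
  qed
  show ?thesis unfolding free_abelian_subgroup_def
  proof (intro conjI exI[of _ B])
    show "0 \<in> G" by fact
    show "\<forall>a\<in>G. \<forall>b\<in>G. a - b \<in> G" by fact
    show "B \<subseteq> G" by fact
    show "\<forall>g\<in>G. \<exists>!c. (\<forall>b. b \<notin> B \<longrightarrow> c b = 0) \<and> finite {b. c b \<noteq> 0} \<and>
        g = (\<Sum>b\<in>{b. c b \<noteq> 0}. zsmult (c b) b)"
    proof
      fix g assume gG: "g \<in> G"
      have "\<exists>c. rep g c"
      proof (cases "\<forall>i. L i g = 0")
        case True then show ?thesis using Lsep gG rep0 by auto
      next
        case False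
        obtain \<beta> where \<beta>: "\<beta> \<in> {i. L i g \<noteq> 0}" "\<forall>y\<in>{i. L i g \<noteq> 0}. (y, \<beta>) \<in> r"
          using finite_max_rel[OF tot rf tr Lfin[OF gG]] False by blast
        then have "g \<in> F \<beta>" using gG F_def by auto
        then show ?thesis using exist by blast
      qed
      then show "\<exists>!c. (\<forall>b. b \<notin> B \<longrightarrow> c b = 0) \<and> finite {b. c b \<noteq> 0} \<and>
        g = (\<Sum>b\<in>{b. c b \<noteq> 0}. zsmult (c b) b)"
        using uniq unfolding rep_def by blast
    qed
  qed
qed



definition Dif :: "nat \<Rightarrow> ((nat \<Rightarrow> nat) \<Rightarrow> real) \<Rightarrow> ((nat \<Rightarrow> nat) \<Rightarrow> real)" where
  "Dif i f = (\<lambda>k. f (k(i := Suc (k i))) - f k)"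

definition Shf :: "nat \<Rightarrow> ((nat \<Rightarrow> nat) \<Rightarrow> real) \<Rightarrow> ((nat \<Rightarrow> nat) \<Rightarrow> real)" where
  "Shf i f = (\<lambda>k. f (k(i := Suc (k i))))"

fun Difs :: "nat list \<Rightarrow> ((nat \<Rightarrow> nat) \<Rightarrow> real) \<Rightarrow> ((nat \<Rightarrow> nat) \<Rightarrow> real)" where
  "Difs [] f = f"
| "Difs (i # w) f = Difs w (Dif i f)"

definition Pd :: "nat \<Rightarrow> ((nat \<Rightarrow> nat) \<Rightarrow> real) \<Rightarrow> bool" where
  "Pd d f \<longleftrightarrow> (\<forall>w. d < length w \<longrightarrow> Difs w f = (\<lambda>_. 0))"

lemma Dif_zero[simp]: "Dif i (\<lambda>_. 0) = (\<lambda>_. 0)" by (simp add: Dif_def)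
lemma Difs_zero[simp]: "Difs w (\<lambda>_. 0) = (\<lambda>_. 0)" by (induction w) auto

lemma Dif_add: "Dif i (\<lambda>k. f k + g k) = (\<lambda>k. Dif i f k + Dif i g k)"
  by (simp add: Dif_def algebra_simps)
lemma Difs_add: "Difs w (\<lambda>k. f k + g k) = (\<lambda>k. Difs w f k + Difs w g k)"
  by (induction w arbitrary: f g) (auto simp: Dif_add)
lemma Dif_diff: "Dif i (\<lambda>k. f k - g k) = (\<lambda>k. Dif i f k - Dif i g k)"
  by (simp add: Dif_def algebra_simps)
lemma Difs_diff: "Difs w (\<lambda>k. f k - g k) = (\<lambda>k. Difs w f k - Difs w g k)"
  by (induction w arbitrary: f g) (auto simp: Dif_diff)

lemma Pd_mono: "Pd d f \<Longrightarrow> d \<le> e \<Longrightarrow> Pd e f" by (auto simp: Pd_def)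

lemma Pd_Suc: "Pd (Suc d) f \<longleftrightarrow> (\<forall>i. Pd d (Dif i f))"
proof
  assume "Pd (Suc d) f"
  then show "\<forall>i. Pd d (Dif i f)" unfolding Pd_def
    by (metis Difs.simps(2) Suc_mono length_Cons)
next
  assume a: "\<forall>i. Pd d (Dif i f)"
  show "Pd (Suc d) f" unfolding Pd_def
  proof (intro allI impI)
    fix w :: "nat list" assume "Suc d < length w"
    then obtain i w' where "w = i # w'" "d < length w'" by (cases w) auto
    then show "Difs w f = (\<lambda>_. 0)" using a unfolding Pd_def by auto
  qed
qed

lemma Pd_0: "Pd 0 f \<longleftrightarrow> (\<forall>i. Dif i f = (\<lambda>_. 0))"
proof
  assume "Pd 0 f" then show "\<forall>i. Dif i f = (\<lambda>_. 0)" unfolding Pd_def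
    by (metis Difs.simps length_Cons zero_less_Suc)
next
  assume a: "\<forall>i. Dif i f = (\<lambda>_. 0)"
  show "Pd 0 f" unfolding Pd_def
  proof (intro allI impI)
    fix w :: "nat list" assume "0 < length w"
    then obtain i w' where "w = i # w'" by (cases w) auto
    then show "Difs w f = (\<lambda>_. 0)" using a by auto
  qed
qed

lemma Pd_add: "Pd a f \<Longrightarrow> Pd b g \<Longrightarrow> Pd (max a b) (\<lambda>k. f k + g k)"
  unfolding Pd_def by (auto simp: Difs_add)

lemma Pd_const: "Pd 0 (\<lambda>_. c)" by (simp add: Pd_0 Dif_def)

lemma Dif_Shf: "Dif i (Shf j f) = Shf j (Dif i f)"
  by (cases "i = j") (auto simp: Dif_def Shf_def fun_upd_twist)

lemma Difs_Shf: "Difs w (Shf j f) = Shf j (Difs w f)"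
  by (induction w arbitrary: f) (auto simp: Dif_Shf)

lemma Shf_zero: "Shf j (\<lambda>_. 0) = (\<lambda>_. 0)" by (simp add: Shf_def)

lemma Pd_Shf: "Pd a f \<Longrightarrow> Pd a (Shf j f)"
  unfolding Pd_def by (auto simp: Difs_Shf Shf_zero)

lemma Dif_mult: "Dif i (\<lambda>k. f k * g k) = (\<lambda>k. Dif i f k * Shf i g k + f k * Dif i g k)"
  by (auto simp: Dif_def Shf_def algebra_simps)

lemma Pd_mult_aux: "\<forall>a b f g. a + b = N \<longrightarrow> Pd a f \<longrightarrow> Pd b g \<longrightarrow> Pd N (\<lambda>k. f k * g k)"
proof (induction N)
  case 0
  show ?case
  proof (intro allI impI)
    fix a b f g assume "a + b = (0::nat)" "Pd a f" "Pd b g"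
    then have "\<forall>i. Dif i f = (\<lambda>_. 0)" "\<forall>i. Dif i g = (\<lambda>_. 0)" by (auto simp: Pd_0)
    then show "Pd 0 (\<lambda>k. f k * g k)" by (simp add: Pd_0 Dif_mult)
  qed
next
  case (Suc N)
  show ?case
  proof (intro allI impI)
    fix a b f g assume ab: "a + b = Suc N" and f: "Pd a f" and g: "Pd b g"
    have "Pd N (Dif i (\<lambda>k. f k * g k))" for i
    proof -
      have t1: "Pd N (\<lambda>k. Dif i f k * Shf i g k)"
      proof (cases a)
        case 0
        then have "Dif i f = (\<lambda>_. 0)" using f by (simp add: Pd_0)
        then show ?thesis by (simp add: Pd_const[of 0, simplified] Pd_mono[of 0])
      next
        case (Suc a')
        then have "Pd a' (Dif i f)" using f Pd_Suc by auto
        moreover have "Pd b (Shf i g)" using g Pd_Shf by auto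
        ultimately show ?thesis using Suc.IH ab Suc by auto
      qed
      have t2: "Pd N (\<lambda>k. f k * Dif i g k)"
      proof (cases b)
        case 0
        then have "Dif i g = (\<lambda>_. 0)" using g by (simp add: Pd_0)
        then show ?thesis by (simp add: Pd_const[of 0, simplified] Pd_mono[of 0])
      next
        case (Suc b')
        then have "Pd b' (Dif i g)" using g Pd_Suc by auto
        then show ?thesis using Suc.IH ab Suc f by auto
      qed
      show ?thesis using Pd_add[OF t1 t2] by (simp add: Dif_mult)
    qed
    then show "Pd (Suc N) (\<lambda>k. f k * g k)" by (simp add: Pd_Suc)
  qed
qed

lemma Pd_mult: "Pd a f \<Longrightarrow> Pd b g \<Longrightarrow> Pd (a + b) (\<lambda>k. f k * g k)"
  using Pd_mult_aux by blast

lemma Difs_sep_aux: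
  assumes A: "finite A"
  shows "\<forall>f k. (\<forall>w. set w \<subseteq> A \<longrightarrow> Difs w f (\<lambda>_. 0) = 0) \<longrightarrow> (\<forall>i. i \<notin> A \<longrightarrow> k i = 0)
          \<longrightarrow> (\<Sum>i\<in>A. k i) = N \<longrightarrow> f k = 0"
proof (induction N)
  case 0
  show ?case
  proof (intro allI impI)
    fix f and k :: "nat \<Rightarrow> nat"
    assume h: "\<forall>w. set w \<subseteq> A \<longrightarrow> Difs w f (\<lambda>_. 0) = 0" "\<forall>i. i \<notin> A \<longrightarrow> k i = 0" "(\<Sum>i\<in>A. k i) = 0"
    have "k = (\<lambda>_. 0)" using h(2) h(3) A by (auto simp: sum_eq_0_iff)
    then show "f k = 0" using h(1)[rule_format, of "[]"] by simp
  qed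
next
  case (Suc N)
  show ?case
  proof (intro allI impI)
    fix f and k :: "nat \<Rightarrow> nat"
    assume h: "\<forall>w. set w \<subseteq> A \<longrightarrow> Difs w f (\<lambda>_. 0) = 0" "\<forall>i. i \<notin> A \<longrightarrow> k i = 0" "(\<Sum>i\<in>A. k i) = Suc N"
    obtain i where i: "i \<in> A" "k i > 0"
      using h(3) by (metis gr0I sum.neutral nat.distinct(1))
    define k' where "k' = k(i := k i - 1)"
    have kk: "k = k'(i := Suc (k' i))" using i unfolding k'_def by auto
    have s: "(\<Sum>j\<in>A. k' j) = N"
    proof -
      have "(\<Sum>j\<in>A. k j) = k i + (\<Sum>j\<in>A-{i}. k j)" using A i by (simp add: sum.remove)
      moreover have "(\<Sum>j\<in>A. k' j) = k' i + (\<Sum>j\<in>A-{i}. k' j)" using A i by (simp add: sum.remove)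
      moreover have "(\<Sum>j\<in>A-{i}. k' j) = (\<Sum>j\<in>A-{i}. k j)" unfolding k'_def by (rule sum.cong) auto
      ultimately show ?thesis using h(3) i unfolding k'_def by simp
    qed
    have k'A: "\<forall>j. j \<notin> A \<longrightarrow> k' j = 0" using h(2) i unfolding k'_def by auto
    have "f k' = 0" using Suc.IH h(1) k'A s by blast
    moreover have "Dif i f k' = 0"
    proof -
      have "\<forall>w. set w \<subseteq> A \<longrightarrow> Difs w (Dif i f) (\<lambda>_. 0) = 0"
        using h(1) i by (metis Difs.simps(2) insert_subset list.simps(15))
      then show ?thesis using Suc.IH k'A s by blast
    qed
    ultimately show "f k = 0" using kk by (simp add: Dif_def)
  qed
qed

lemma Difs_sep:
  assumes "finite A" "\<forall>w. set w \<subseteq> A \<longrightarrow> Difs w f (\<lambda>_. 0) = 0" "\<forall>i. i \<notin> A \<longrightarrow> k i = 0"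
  shows "f k = 0"
  using Difs_sep_aux[OF assms(1)] assms(2,3) by blast



inductive_set Cf :: "((nat \<Rightarrow> real) \<Rightarrow> real) set" where
  cconst: "(\<lambda>_. of_int c) \<in> Cf"
| cvar: "(\<lambda>s. s i) \<in> Cf"
| cadd: "p \<in> Cf \<Longrightarrow> q \<in> Cf \<Longrightarrow> (\<lambda>s. p s + q s) \<in> Cf"
| cmult: "p \<in> Cf \<Longrightarrow> q \<in> Cf \<Longrightarrow> (\<lambda>s. p s * q s) \<in> Cf"

lemma Cf_neg: "p \<in> Cf \<Longrightarrow> (\<lambda>s. - p s) \<in> Cf"
  using cmult[OF cconst[of "-1"], of p] by simp

lemma Cf_diff: "p \<in> Cf \<Longrightarrow> q \<in> Cf \<Longrightarrow> (\<lambda>s. p s - q s) \<in> Cf"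
  using cadd[OF _ Cf_neg, of p q] by simp

lemma Cf_sum: "finite S \<Longrightarrow> (\<forall>j\<in>S. g j \<in> Cf) \<Longrightarrow> (\<lambda>s. \<Sum>j\<in>S. g j s) \<in> Cf"
proof (induction S rule: finite_induct)
  case empty then show ?case using cconst[of 0] by simp
next
  case (insert x F) then show ?case using cadd[of "g x" "\<lambda>s. \<Sum>j\<in>F. g j s"] by simp
qed

lemma Cf_poly:
  "f \<in> Cf \<Longrightarrow> \<exists>P. (\<forall>s r. P (s(i := r)) = P s) \<and> (\<forall>s. f s = poly (P s) (s i))"
proof (induction f rule: Cf.induct)
  case (cconst c)
  show ?case by (rule exI[of _ "\<lambda>s. [:of_int c:]"]) simp
next
  case (cvar j)
  show ?case
  proof (cases "j = i")
    case True then show ?thesis by (intro exI[of _ "\<lambda>s. [:0, 1:]"]) simp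
  next
    case False then show ?thesis by (intro exI[of _ "\<lambda>s. [:s j:]"]) simp
  qed
next
  case (cadd p q)
  then obtain P Q where h1: "\<forall>s r. P (s(i := r)) = P s" and h2: "\<forall>s. p s = poly (P s) (s i)"
    and h3: "\<forall>s r. Q (s(i := r)) = Q s" and h4: "\<forall>s. q s = poly (Q s) (s i)" by blast
  have "\<forall>s r. P (s(i := r)) + Q (s(i := r)) = P s + Q s" using h1 h3 by metis
  moreover have "\<forall>s. p s + q s = poly (P s + Q s) (s i)" using h2 h4 by simp
  ultimately show ?case by (intro exI[of _ "\<lambda>s. P s + Q s"]) blast
next
  case (cmult p q)
  then obtain P Q where h1: "\<forall>s r. P (s(i := r)) = P s" and h2: "\<forall>s. p s = poly (P s) (s i)"
    and h3: "\<forall>s r. Q (s(i := r)) = Q s" and h4: "\<forall>s. q s = poly (Q s) (s i)" by blast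
  have "\<forall>s r. P (s(i := r)) * Q (s(i := r)) = P s * Q s" using h1 h3 by metis
  moreover have "\<forall>s. p s * q s = poly (P s * Q s) (s i)" using h2 h4 by simp
  ultimately show ?case by (intro exI[of _ "\<lambda>s. P s * Q s"]) blast
qed

lemma Cf_ident_aux:
  assumes f: "f \<in> Cf"
  shows "finite A \<Longrightarrow> (\<forall>s. (\<forall>i\<in>A. s i \<in> \<nat>) \<longrightarrow> f s = 0) \<Longrightarrow> f s = 0"
proof (induction A arbitrary: s rule: finite_induct)
  case empty then show ?case by simp
next
  case (insert a A)
  have "\<forall>s. (\<forall>i\<in>A. s i \<in> \<nat>) \<longrightarrow> f s = 0"
  proof (intro allI impI)
    fix s :: "nat \<Rightarrow> real" assume sA: "\<forall>i\<in>A. s i \<in> \<nat>"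
    obtain P where P: "\<forall>s r. P (s(a := r)) = P s" "\<forall>s. f s = poly (P s) (s a)"
      using Cf_poly[OF f, of a] by blast
    have roots: "poly (P s) (real m) = 0" for m
    proof -
      have "\<forall>i\<in>insert a A. (s(a := real m)) i \<in> \<nat>" using sA insert.hyps(2) by auto
      then have "f (s(a := real m)) = 0" using insert.prems by blast
      then show ?thesis using P by (metis fun_upd_same)
    qed
    have "P s = 0"
    proof (rule ccontr)
      assume "P s \<noteq> 0"
      then have fin: "finite {x. poly (P s) x = 0}" by (rule poly_roots_finite)
      have "range real \<subseteq> {x. poly (P s) x = 0}" using roots by auto
      moreover have "infinite (range (real :: nat \<Rightarrow> real))"
        by (rule range_inj_infinite) (simp add: inj_on_def)
      ultimately show False using fin finite_subset by blast
    qed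
    then show "f s = 0" using P by simp
  qed
  then show ?case using insert.IH by blast
qed

lemma Cf_ident:
  "f \<in> Cf \<Longrightarrow> finite A \<Longrightarrow> (\<forall>s. (\<forall>i\<in>A. s i \<in> \<nat>) \<longrightarrow> f s = 0) \<Longrightarrow> f s = 0"
  using Cf_ident_aux by blast

lemma Cf_deg: "f \<in> Cf \<Longrightarrow> \<exists>d. Pd d (\<lambda>k. f (\<lambda>i. real (k i)))"
proof (induction f rule: Cf.induct)
  case (cconst c) then show ?case using Pd_const by blast
next
  case (cvar i)
  have "Pd 0 (Dif j (\<lambda>k. real (k i)))" for j
  proof -
    have "Dif j (\<lambda>k. real (k i)) = (\<lambda>_. if j = i then 1 else 0)"
      by (auto simp: Dif_def)
    then show ?thesis using Pd_const by simp
  qed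
  then have "Pd (Suc 0) (\<lambda>k. real (k i))" by (simp add: Pd_Suc)
  then show ?case by blast
next
  case (cadd p q)
  then obtain a b where "Pd a (\<lambda>k. p (\<lambda>i. real (k i)))" "Pd b (\<lambda>k. q (\<lambda>i. real (k i)))" by blast
  then show ?case using Pd_add by blast
next
  case (cmult p q)
  then obtain a b where "Pd a (\<lambda>k. p (\<lambda>i. real (k i)))" "Pd b (\<lambda>k. q (\<lambda>i. real (k i)))" by blast
  then show ?case using Pd_mult by blast
qed

lemma Cf_int: "f \<in> Cf \<Longrightarrow> f (\<lambda>i. real (k i)) \<in> \<int>"
  by (induction f rule: Cf.induct) auto

lemma Difs_int: "(\<forall>k. f k \<in> \<int>) \<Longrightarrow> Difs w f k \<in> \<int>"
proof (induction w arbitrary: f)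
  case Nil then show ?case by simp
next
  case (Cons i w)
  have "\<forall>k. Dif i f k \<in> \<int>" using Cons.prems by (auto simp: Dif_def)
  then show ?case using Cons.IH by simp
qed



definition pointR :: "nat \<Rightarrow> (nat \<Rightarrow> real) \<Rightarrow> (nat \<Rightarrow> real)" where
  "pointR n s = (\<lambda>i. if i = 0 then 1 - (\<Sum>j\<in>{1..n}. s j) else if i \<le> n then s i else 0)"

lemma sum_atMost_split0: "(\<Sum>i\<le>(n::nat). f i) = f 0 + (\<Sum>i\<in>{1..n}. (f i :: real))"
proof -
  have "{..n} = insert 0 {Suc 0..n}" using atLeastAtMost_insertL[of 0 n] atMost_atLeast0[of n] by simp
  then show ?thesis by simp
qed

lemma pointR_hyp: "pointR n s \<in> hyperplane n"
proof -
  have "(\<Sum>i\<in>{1..n}. pointR n s i) = (\<Sum>i\<in>{1..n}. s i)"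
    by (rule sum.cong) (auto simp: pointR_def)
  then show ?thesis unfolding hyperplane_def
    by (auto simp: sum_atMost_split0[of "pointR n s" n]) (auto simp: pointR_def)
qed

lemma hyp_pointR: "t \<in> hyperplane n \<Longrightarrow> pointR n t = t"
proof -
  assume t: "t \<in> hyperplane n"
  then have "t 0 = 1 - (\<Sum>j\<in>{1..n}. t j)" unfolding hyperplane_def
    using sum_atMost_split0[of t n] by simp
  then show ?thesis using t unfolding hyperplane_def pointR_def by (auto simp: fun_eq_iff)
qed

lemma pointR_cong: "(\<forall>i\<in>{1..n}. s i = s' i) \<Longrightarrow> pointR n s = pointR n s'"
  unfolding pointR_def by (auto simp: fun_eq_iff intro!: sum.cong)

lemma polyfun_Cf: "p \<in> int_polyfun n \<Longrightarrow> (\<lambda>s. p (pointR n s)) \<in> Cf"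
proof (induction p rule: int_polyfun.induct)
  case (const c) then show ?case by (simp add: Cf.cconst)
next
  case (var i)
  show ?case
  proof (cases "i = 0")
    case True
    have "(\<lambda>s. 1 - (\<Sum>j\<in>{1..n}. s j)) \<in> Cf"
      using Cf_diff[OF Cf.cconst[of 1] Cf_sum[of "{1..n}" "\<lambda>j s. s j"]] by (simp add: Cf.cvar)
    then show ?thesis using True by (simp add: pointR_def)
  next
    case False
    then show ?thesis using var by (simp add: pointR_def Cf.cvar)
  qed
next
  case (add p q) then show ?case using Cf.cadd by blast
next
  case (mult p q) then show ?case using Cf.cmult by blast
qed

lemma polyfun_neg: "p \<in> int_polyfun n \<Longrightarrow> (\<lambda>t. - p t) \<in> int_polyfun n"
  using int_polyfun.mult[OF int_polyfun.const[of "-1"], of p] by simp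

lemma Zdelta_0: "(\<lambda>_. 0) \<in> Zdelta n"
  unfolding Zdelta_def using int_polyfun.const[of 0 n] by (auto intro!: exI[of _ "\<lambda>_. 0"])

lemma Zdelta_diff: "f \<in> Zdelta n \<Longrightarrow> g \<in> Zdelta n \<Longrightarrow> (\<lambda>t. f t - g t) \<in> Zdelta n"
proof -
  assume "f \<in> Zdelta n" "g \<in> Zdelta n"
  then obtain p q where p: "p \<in> int_polyfun n" "f = (\<lambda>t. if t \<in> hyperplane n then p t else 0)"
    and q: "q \<in> int_polyfun n" "g = (\<lambda>t. if t \<in> hyperplane n then q t else 0)"
    unfolding Zdelta_def by blast
  have "(\<lambda>t. p t + - q t) \<in> int_polyfun n" using p q polyfun_neg int_polyfun.add by blast
  moreover have "(\<lambda>t. f t - g t) = (\<lambda>t. if t \<in> hyperplane n then p t + - q t else 0)"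
    using p q by auto
  ultimately show ?thesis unfolding Zdelta_def by (intro CollectI exI[of _ "\<lambda>t. p t + - q t"]) simp
qed

lemma pull_0: "pull \<theta> m (\<lambda>_. 0) = (\<lambda>_. 0)" by (simp add: pull_def)

lemma pull_diff: "pull \<theta> m (\<lambda>t. f t - g t) = (\<lambda>s. pull \<theta> m f s - pull \<theta> m g s)"
  by (simp add: pull_def fun_eq_iff)

lemma ZX_fin_0: "0 \<in> ZX_fin X act"
  unfolding ZX_fin_def ZX_def finitely_supported_def support_def
  by (simp add: zero_fun_def Zdelta_0 pull_0)

lemma ZX_fin_diff:
  assumes a: "a \<in> ZX_fin X act" and b: "b \<in> ZX_fin X act"
  shows "a - b \<in> ZX_fin X act"
proof -
  have e: "(a - b) n x = (\<lambda>t. a n x t - b n x t)" for n x by (simp add: fun_eq_iff)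
  have aZ: "a \<in> ZX X act" and bZ: "b \<in> ZX X act" using a b unfolding ZX_fin_def by auto
  have ZXab: "a - b \<in> ZX X act" unfolding ZX_def
  proof (intro CollectI conjI allI impI)
    fix n x assume "x \<in> X n"
    then have "a n x \<in> Zdelta n" "b n x \<in> Zdelta n" using aZ bZ unfolding ZX_def by auto
    then show "(a - b) n x \<in> Zdelta n" unfolding e by (rule Zdelta_diff)
  next
    fix n x assume "x \<notin> X n"
    then have "a n x = (\<lambda>_. 0)" "b n x = (\<lambda>_. 0)" using aZ bZ unfolding ZX_def by auto
    then show "(a - b) n x = (\<lambda>_. 0)" unfolding e by simp
  next
    fix m n \<theta> x assume h: "mono_map \<theta> m n \<and> x \<in> X n"
    then have "a m (act \<theta> m n x) = pull \<theta> m (a n x)" "b m (act \<theta> m n x) = pull \<theta> m (b n x)"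
      using aZ bZ unfolding ZX_def by auto
    then show "(a - b) m (act \<theta> m n x) = pull \<theta> m ((a - b) n x)" unfolding e pull_diff by simp
  qed
  have "support X act (a - b) n \<subseteq> support X act a n \<union> support X act b n" for n
  proof
    fix y assume "y \<in> support X act (a - b) n"
    then obtain \<theta> k x where h: "y = act \<theta> n k x" "mono_map \<theta> n k" "x \<in> X k" "(a - b) k x \<noteq> (\<lambda>_. 0)"
      unfolding support_def by blast
    then have "a k x \<noteq> (\<lambda>_. 0) \<or> b k x \<noteq> (\<lambda>_. 0)" by (auto simp: e)
    then show "y \<in> support X act a n \<union> support X act b n" using h unfolding support_def by blast
  qed
  then have "{(n, y). y \<in> support X act (a - b) n \<and> nondegenerate X act n y} \<subseteq>
      {(n, y). y \<in> support X act a n \<and> nondegenerate X act n y} \<union> {(n, y). y \<in> support X act b n \<and> nondegenerate X act n y}"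
    by auto
  moreover have "finite {(n, y). y \<in> support X act a n \<and> nondegenerate X act n y}"
     "finite {(n, y). y \<in> support X act b n \<and> nondegenerate X act n y}"
    using a b unfolding ZX_fin_def finitely_supported_def by auto
  ultimately have "finitely_supported X act (a - b)"
    unfolding finitely_supported_def by (metis (no_types, lifting) finite_UnI finite_subset)
  then show ?thesis using ZXab unfolding ZX_fin_def by blast
qed



definition Lr :: "(nat \<Rightarrow> 'a set) \<Rightarrow> ((nat \<Rightarrow> nat) \<Rightarrow> nat \<Rightarrow> nat \<Rightarrow> 'a \<Rightarrow> 'a) \<Rightarrow> nat \<times> 'a \<times> nat list
    \<Rightarrow> (nat \<Rightarrow> 'a \<Rightarrow> (nat \<Rightarrow> real) \<Rightarrow> real) \<Rightarrow> real" where
  "Lr X act i \<phi> = (case i of (n, x, w) \<Rightarrow>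
     if nondegenerate X act n x \<and> set w \<subseteq> {1..n}
     then Difs w (\<lambda>k. \<phi> n x (pointR n (\<lambda>j. real (k j)))) (\<lambda>_. 0) else 0)"

lemma ZX_poly:
  assumes "\<phi> \<in> ZX X act" "x \<in> X n"
  shows "\<exists>p\<in>int_polyfun n. (\<lambda>k. \<phi> n x (pointR n (\<lambda>j. real (k j)))) = (\<lambda>k. (\<lambda>s. p (pointR n s)) (\<lambda>j. real (k j)))
          \<and> \<phi> n x = (\<lambda>t. if t \<in> hyperplane n then p t else 0)"
proof -
  have "\<phi> n x \<in> Zdelta n" using assms unfolding ZX_def by auto
  then obtain p where p: "p \<in> int_polyfun n" "\<phi> n x = (\<lambda>t. if t \<in> hyperplane n then p t else 0)"
    unfolding Zdelta_def by blast
  then show ?thesis using pointR_hyp by (intro bexI[of _ p]) auto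
qed

lemma Lr_int: "\<phi> \<in> ZX X act \<Longrightarrow> Lr X act i \<phi> \<in> \<int>"
proof -
  assume phi: "\<phi> \<in> ZX X act"
  obtain n x w where i: "i = (n, x, w)" by (cases i) auto
  show ?thesis
  proof (cases "nondegenerate X act n x \<and> set w \<subseteq> {1..n}")
    case True
    then have "x \<in> X n" by (simp add: nondegenerate_def)
    then obtain p where p: "p \<in> int_polyfun n"
      "(\<lambda>k. \<phi> n x (pointR n (\<lambda>j. real (k j)))) = (\<lambda>k. (\<lambda>s. p (pointR n s)) (\<lambda>j. real (k j)))"
      using ZX_poly[OF phi] by blast
    have "\<forall>k. (\<lambda>s. p (pointR n s)) (\<lambda>j. real (k j)) \<in> \<int>"
      using Cf_int[OF polyfun_Cf[OF p(1)]] by blast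
    then show ?thesis using True i p(2) Difs_int by (simp add: Lr_def)
  next
    case False then show ?thesis using i by (auto simp: Lr_def)
  qed
qed

lemma Lr_diff: "Lr X act i (a - b) = Lr X act i a - Lr X act i b"
proof -
  obtain n x w where i: "i = (n, x, w)" by (cases i) auto
  have "(\<lambda>k. (a - b) n x (pointR n (\<lambda>j. real (k j)))) =
     (\<lambda>k. a n x (pointR n (\<lambda>j. real (k j))) - b n x (pointR n (\<lambda>j. real (k j))))" by simp
  then show ?thesis using i by (simp add: Lr_def Difs_diff)
qed

lemma floor_diff_Ints: "u \<in> \<int> \<Longrightarrow> v \<in> \<int> \<Longrightarrow> \<lfloor>u - v\<rfloor> = \<lfloor>u\<rfloor> - \<lfloor>(v::real)\<rfloor>"
  by (metis Ints_cases floor_of_int of_int_diff)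

lemma Lr_fin:
  assumes phi: "\<phi> \<in> ZX_fin X act" and ss: "simplicial_set X act"
  shows "finite {i. Lr X act i \<phi> \<noteq> 0}"
proof -
  have phZ: "\<phi> \<in> ZX X act" using phi unfolding ZX_fin_def by auto
  define N where "N = {(n, x). nondegenerate X act n x \<and> \<phi> n x \<noteq> (\<lambda>_. 0)}"
  have "N \<subseteq> {(n, y). y \<in> support X act \<phi> n \<and> nondegenerate X act n y}"
  proof
    fix z assume "z \<in> N"
    then obtain n x where z: "z = (n, x)" "nondegenerate X act n x" "\<phi> n x \<noteq> (\<lambda>_. 0)"
      unfolding N_def by auto
    have xX: "x \<in> X n" using z by (simp add: nondegenerate_def)
    have "act id n n x = x" using ss xX unfolding simplicial_set_def by auto
    moreover have "mono_map id n n" by (simp add: mono_map_def)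
    ultimately have "x \<in> support X act \<phi> n" unfolding support_def
      by (intro CollectI exI[of _ id] exI[of _ n] exI[of _ x]) (use xX z in auto)
    then show "z \<in> {(n, y). y \<in> support X act \<phi> n \<and> nondegenerate X act n y}" using z by auto
  qed
  moreover have "finite {(n, y). y \<in> support X act \<phi> n \<and> nondegenerate X act n y}"
    using phi unfolding ZX_fin_def finitely_supported_def by auto
  ultimately have fN: "finite N" by (rule finite_subset)
  define q where "q n x = (\<lambda>k. \<phi> n x (pointR n (\<lambda>j. real (k j))))" for n x
  define dd where "dd n x = (SOME d. Pd d (q n x))" for n x
  have dd: "Pd (dd n x) (q n x)" if xXn: "x \<in> X n" for n x
  proof -
    obtain p where p: "p \<in> int_polyfun n" "q n x = (\<lambda>k. (\<lambda>s. p (pointR n s)) (\<lambda>j. real (k j)))"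
      using ZX_poly[OF phZ xXn] unfolding q_def by auto
    then have "\<exists>d. Pd d (q n x)" using Cf_deg[OF polyfun_Cf[OF p(1)]] by simp
    then show ?thesis unfolding dd_def by (rule someI_ex)
  qed
  define W where "W z = (case z of (n, x) \<Rightarrow> (\<lambda>w. (n, x, w)) ` {w. set w \<subseteq> {1..n} \<and> length w \<le> dd n x})" for z
  have fW: "finite (W z)" for z
    unfolding W_def by (cases z) (auto intro: finite_lists_length_le)
  have "{i. Lr X act i \<phi> \<noteq> 0} \<subseteq> (\<Union>z\<in>N. W z)"
  proof
    fix i assume "i \<in> {i. Lr X act i \<phi> \<noteq> 0}"
    then have ne: "Lr X act i \<phi> \<noteq> 0" by simp
    obtain n x w where i: "i = (n, x, w)" by (cases i) auto
    have c: "nondegenerate X act n x" "set w \<subseteq> {1..n}" and ne2: "Difs w (q n x) (\<lambda>_. 0) \<noteq> 0"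
      using ne i by (auto simp: Lr_def q_def split: if_splits)
    have nz: "\<phi> n x \<noteq> (\<lambda>_. 0)"
    proof
      assume "\<phi> n x = (\<lambda>_. 0)"
      then have "q n x = (\<lambda>_. 0)" by (simp add: q_def)
      then show False using ne2 by simp
    qed
    have xX: "x \<in> X n" using c by (simp add: nondegenerate_def)
    have "length w \<le> dd n x"
    proof (rule ccontr)
      assume "\<not> length w \<le> dd n x"
      then have "Difs w (q n x) = (\<lambda>_. 0)" using dd[OF xX] unfolding Pd_def by auto
      then show False using ne2 by simp
    qed
    then have "i \<in> W (n, x)" unfolding W_def using i c by auto
    moreover have "(n, x) \<in> N" unfolding N_def using c nz by auto
    ultimately show "i \<in> (\<Union>z\<in>N. W z)" by blast
  qed
  moreover have "finite (\<Union>z\<in>N. W z)" using fN fW by (intro finite_UN_I) auto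
  ultimately show ?thesis by (rule finite_subset)
qed

lemma Lr_sep:
  assumes phi: "\<phi> \<in> ZX_fin X act" and z: "\<forall>i. Lr X act i \<phi> = 0"
  shows "\<phi> = 0"
proof -
  have phZ: "\<phi> \<in> ZX X act" using phi unfolding ZX_fin_def by auto
  have nd: "\<phi> n x = (\<lambda>_. 0)" if "nondegenerate X act n x" for n x
  proof -
    have xX: "x \<in> X n" using that by (simp add: nondegenerate_def)
    obtain p where p: "p \<in> int_polyfun n"
      "(\<lambda>k. \<phi> n x (pointR n (\<lambda>j. real (k j)))) = (\<lambda>k. (\<lambda>s. p (pointR n s)) (\<lambda>j. real (k j)))"
      "\<phi> n x = (\<lambda>t. if t \<in> hyperplane n then p t else 0)"
      using ZX_poly[OF phZ xX] by blast
    define f where "f = (\<lambda>s. p (pointR n s))"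
    have fC: "f \<in> Cf" unfolding f_def using polyfun_Cf[OF p(1)] .
    have "\<forall>w. set w \<subseteq> {1..n} \<longrightarrow> Difs w (\<lambda>k. f (\<lambda>j. real (k j))) (\<lambda>_. 0) = 0"
    proof (intro allI impI)
      fix w :: "nat list" assume "set w \<subseteq> {1..n}"
      then show "Difs w (\<lambda>k. f (\<lambda>j. real (k j))) (\<lambda>_. 0) = 0"
        using z[rule_format, of "(n, x, w)"] that p(2) unfolding Lr_def f_def by simp
    qed
    then have lat0: "f (\<lambda>j. real (k j)) = 0" if "\<forall>i. i \<notin> {1..n} \<longrightarrow> k i = 0" for k
      using Difs_sep[of "{1..n}"] that by blast
    have "f s = 0" for s
    proof (rule Cf_ident[OF fC, of "{1..n}"])
      show "finite {1..n}" by simp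
      show "\<forall>s. (\<forall>i\<in>{1..n}. s i \<in> \<nat>) \<longrightarrow> f s = 0"
      proof (intro allI impI)
        fix s :: "nat \<Rightarrow> real" assume sN: "\<forall>i\<in>{1..n}. s i \<in> \<nat>"
        define k where "k j = (if j \<in> {1..n} then nat \<lfloor>s j\<rfloor> else 0)" for j
        have "\<forall>i\<in>{1..n}. s i = real (k i)"
          using sN unfolding k_def by (auto elim!: Nats_cases)
        then have "pointR n s = pointR n (\<lambda>j. real (k j))" by (rule pointR_cong)
        moreover have "f (\<lambda>j. real (k j)) = 0" using lat0 unfolding k_def by auto
        ultimately show "f s = 0" unfolding f_def by simp
      qed
    qed
    then have "p t = 0" if "t \<in> hyperplane n" for t
      using hyp_pointR[OF that] unfolding f_def by metis
    then show ?thesis using p(3) by (auto simp: fun_eq_iff)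
  qed
  have all: "\<phi> n x = (\<lambda>_. 0)" for n x
  proof (induction n arbitrary: x rule: less_induct)
    case (less n)
    show ?case
    proof (cases "x \<in> X n")
      case False then show ?thesis using phZ unfolding ZX_def by auto
    next
      case True
      show ?thesis
      proof (cases "degenerate X act n x")
        case False then show ?thesis using nd True by (simp add: nondegenerate_def)
      next
        case True
        then obtain m \<theta> y where h: "m < n" "mono_map \<theta> n m" "y \<in> X m" "x = act \<theta> n m y"
          unfolding degenerate_def by blast
        then have "\<phi> n x = pull \<theta> n (\<phi> m y)" using phZ unfolding ZX_def by auto
        also have "\<dots> = (\<lambda>_. 0)" using less.IH[OF h(1)] by (simp add: pull_0)
        finally show ?thesis .
      qed
    qed
  qed
  then show ?thesis by (simp add: fun_eq_iff)
qed

theorem lemma9p3: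
  fixes X :: "nat \<Rightarrow> 'a set" and act :: "(nat \<Rightarrow> nat) \<Rightarrow> nat \<Rightarrow> nat \<Rightarrow> 'a \<Rightarrow> 'a"
  assumes "simplicial_set X act" and "locally_finite X act"
  shows "free_abelian_subgroup (ZX_fin X act)"
proof (rule free_from_functionals[where L = "\<lambda>i \<phi>. \<lfloor>Lr X act i \<phi>\<rfloor>"])
  show "0 \<in> ZX_fin X act" by (rule ZX_fin_0)
  show "\<forall>a\<in>ZX_fin X act. \<forall>b\<in>ZX_fin X act. a - b \<in> ZX_fin X act" using ZX_fin_diff by blast
  have int: "Lr X act i \<phi> \<in> \<int>" if "\<phi> \<in> ZX_fin X act" for i \<phi>
    using Lr_int that unfolding ZX_fin_def by blast
  show "\<lfloor>Lr X act i (a - b)\<rfloor> = \<lfloor>Lr X act i a\<rfloor> - \<lfloor>Lr X act i b\<rfloor>"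
    if "a \<in> ZX_fin X act" "b \<in> ZX_fin X act" for i a b
    using floor_diff_Ints[OF int[OF that(1)] int[OF that(2)]] by (simp add: Lr_diff)
  have eq: "\<lfloor>Lr X act i \<phi>\<rfloor> = 0 \<longleftrightarrow> Lr X act i \<phi> = 0" if "\<phi> \<in> ZX_fin X act" for i \<phi>
    using int[OF that, of i] by (metis Ints_cases floor_of_int of_int_0 of_int_eq_0_iff)
  show "finite {i. \<lfloor>Lr X act i g\<rfloor> \<noteq> 0}" if "g \<in> ZX_fin X act" for g
    using Lr_fin[OF that assms(1)] eq[OF that] by simp
  show "g = 0" if "g \<in> ZX_fin X act" "\<forall>i. \<lfloor>Lr X act i g\<rfloor> = 0" for g
    using Lr_sep[OF that(1)] that(2) eq[OF that(1)] by simp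
qed


end
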